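(* Let $n$ be the number of validators and let $f\in[0,n]$. If two conflicting chains are finalized according to any two respective views, then at least $\frac{n}{3}$ validators can be detected (from the messages in those views) to have violated either $\mathbf{E_1}$ or $\mathbf{E_2}$.
   Context: A set of $n$ validators exchange signed messages. A block is a pair $B=(b,p)$ where $b$ is a body (containing a reference to a parent block) and $p\ge 0$ is its slot; a parent always has strictly smaller slot; the genesis block $B_{\text{genesis}}=(b_{-1},-1)$ has no parent. Chains are identified with their last block; $\chi.p$ is the slot of its last block; $\preceq$ is the prefix relation and two chains conflict if neither is a prefix of the other. A view is a set of messages. A checkpoint is $\mathcal{C}=(\chi,c)$ with $c$ a slot. An FFG-vote $\mathcal{C}_1\to\mathcal{C}_2$ (source, target) is valid iff $\mathcal{C}_1.c<\mathcal{C}_2.c$ and $\mathcal{C}_1.\chi\preceq\mathcal{C}_2.\chi$; FFG-votes are carried inside VOTE messages of validators. In a view $\mathcal{V}$: $\mathcal{C}$ is justified iff $\mathcal{C}=(B_{\text{genesis}},0)$ or there is a set of VOTE messages in $\mathcal{V}$ from at least $\frac{2}{3}n$ distinct validators whose FFG-votes $\mathcal{S}\to\mathcal{T}$ are all valid, with $\mathcal{S}$ justified in $\mathcal{V}$, $\mathcal{S}.\chi\preceq\mathcal{C}.\chi\preceq\mathcal{T}.\chi$ and $\mathcal{T}.c=\mathcal{C}.c$. $\mathcal{C}$ is finalized iff $\mathcal{C}=(B_{\text{genesis}},0)$ or $\mathcal{C}$ is justified and there is a set of VOTE messages in $\mathcal{V}$ from at least $\frac{2}{3}n$ distinct validators each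 carrying a valid FFG-vote $\mathcal{C}\to\mathcal{T}$ with $\mathcal{T}.c=\mathcal{C}.c+1$. A chain $\chi$ is finalized according to $\mathcal{V}$ iff $\chi\preceq\mathcal{C}.\chi$ for some checkpoint $\mathcal{C}$ finalized in $\mathcal{V}$. Checkpoint preorder: $\mathcal{C}\le\mathcal{C}'$ iff $\mathcal{C}.c<\mathcal{C}'.c$, or $\mathcal{C}.c=\mathcal{C}'.c$ and $\mathcal{C}.\chi.p\le\mathcal{C}'.\chi.p$; $\mathcal{C}<\mathcal{C}'$ means $\mathcal{C}\le\mathcal{C}'$ and not $\mathcal{C}'\le\mathcal{C}$. A validator violates $\mathbf{E_1}$ if it sent two distinct FFG-votes $\mathcal{C}_1\to\mathcal{C}_2$, $\mathcal{C}_3\to\mathcal{C}_4$ with $\mathcal{C}_2.c=\mathcal{C}_4.c$; it violates $\mathbf{E_2}$ if it sent two distinct FFG-votes with $\mathcal{C}_3<\mathcal{C}_1$ and $\mathcal{C}_2.c<\mathcal{C}_4.c$. *)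

theory Defs
  imports Complex_Main
begin

text \<open>Blocks form an abstract type 'b equipped with a parent map, a slot map and a
  distinguished genesis block.  Chains are identified with their last block.\<close>

definition block_structure :: "('b \<Rightarrow> 'b option) \<Rightarrow> ('b \<Rightarrow> int) \<Rightarrow> 'b \<Rightarrow> bool" where
  "block_structure parent slot genesis \<longleftrightarrow>
     parent genesis = None \<and> slot genesis = -1 \<and>
     (\<forall>b. b \<noteq> genesis \<longrightarrow> slot b \<ge> 0 \<and> (\<exists>b'. parent b = Some b')) \<and>
     (\<forall>b b'. parent b = Some b' \<longrightarrow> slot b' < slot b)"

definition prefix_chain :: "('b \<Rightarrow> 'b option) \<Rightarrow> 'b \<Rightarrow> 'b \<Rightarrow> bool" where
  "prefix_chain parent x y \<longleftrightarrow> (y, x) \<in> {(b, b'). parent b = Some b'}\<^sup>*"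

definition conflicting :: "('b \<Rightarrow> 'b option) \<Rightarrow> 'b \<Rightarrow> 'b \<Rightarrow> bool" where
  "conflicting parent x y \<longleftrightarrow> \<not> prefix_chain parent x y \<and> \<not> prefix_chain parent y x"

text \<open>Checkpoints (chain, slot); a VOTE message is represented by its sender (a validator
  index < n) and its FFG-vote (source, target).  A view is a set of such messages.\<close>
type_synonym 'b checkpoint = "'b \<times> int"
type_synonym 'b vote_msg = "nat \<times> 'b checkpoint \<times> 'b checkpoint"

definition valid_ffg :: "('b \<Rightarrow> 'b option) \<Rightarrow> 'b checkpoint \<Rightarrow> 'b checkpoint \<Rightarrow> bool" where
  "valid_ffg parent S T \<longleftrightarrow> snd S < snd T \<and> prefix_chain parent (fst S) (fst T)"

inductive justified ::
  "('b \<Rightarrow> 'b option) \<Rightarrow> 'b \<Rightarrow> nat \<Rightarrow> 'b vote_msg set \<Rightarrow> 'b checkpoint \<Rightarrow> bool"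
  for parent genesis n V where
  genesis_just: "justified parent genesis n V (genesis, 0)"
| quorum_just: "\<lbrakk> Q \<subseteq> {..<n}; real (card Q) \<ge> 2/3 * real n;
     \<forall>v\<in>Q. \<exists>S T. (v, S, T) \<in> V \<and> valid_ffg parent S T \<and> justified parent genesis n V S \<and>
        prefix_chain parent (fst S) (fst C) \<and> prefix_chain parent (fst C) (fst T) \<and>
        snd T = snd C \<rbrakk>
   \<Longrightarrow> justified parent genesis n V C"

definition finalized ::
  "('b \<Rightarrow> 'b option) \<Rightarrow> 'b \<Rightarrow> nat \<Rightarrow> 'b vote_msg set \<Rightarrow> 'b checkpoint \<Rightarrow> bool" where
  "finalized parent genesis n V C \<longleftrightarrow> C = (genesis, 0) \<or>
     (justified parent genesis n V C \<and>
      (\<exists>Q \<subseteq> {..<n}. real (card Q) \<ge> 2/3 * real n \<and>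
         (\<forall>v\<in>Q. \<exists>T. (v, C, T) \<in> V \<and> valid_ffg parent C T \<and> snd T = snd C + 1)))"

definition chain_finalized ::
  "('b \<Rightarrow> 'b option) \<Rightarrow> 'b \<Rightarrow> nat \<Rightarrow> 'b vote_msg set \<Rightarrow> 'b \<Rightarrow> bool" where
  "chain_finalized parent genesis n V x \<longleftrightarrow>
     (\<exists>C. finalized parent genesis n V C \<and> prefix_chain parent x (fst C))"

definition ck_le :: "('b \<Rightarrow> int) \<Rightarrow> 'b checkpoint \<Rightarrow> 'b checkpoint \<Rightarrow> bool" where
  "ck_le slot C C' \<longleftrightarrow> snd C < snd C' \<or> (snd C = snd C' \<and> slot (fst C) \<le> slot (fst C'))"

definition ck_less :: "('b \<Rightarrow> int) \<Rightarrow> 'b checkpoint \<Rightarrow> 'b checkpoint \<Rightarrow> bool" where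
  "ck_less slot C C' \<longleftrightarrow> ck_le slot C C' \<and> \<not> ck_le slot C' C"

definition violates_E1 :: "'b vote_msg set \<Rightarrow> nat \<Rightarrow> bool" where
  "violates_E1 M v \<longleftrightarrow> (\<exists>C1 C2 C3 C4. (v, C1, C2) \<in> M \<and> (v, C3, C4) \<in> M \<and>
      (C1, C2) \<noteq> (C3, C4) \<and> snd C2 = snd C4)"

definition violates_E2 :: "('b \<Rightarrow> int) \<Rightarrow> 'b vote_msg set \<Rightarrow> nat \<Rightarrow> bool" where
  "violates_E2 slot M v \<longleftrightarrow> (\<exists>C1 C2 C3 C4. (v, C1, C2) \<in> M \<and> (v, C3, C4) \<in> M \<and>
      (C1, C2) \<noteq> (C3, C4) \<and> ck_less slot C3 C1 \<and> snd C2 < snd C4)"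

end

theory Submission
  imports Defs
begin

lemma pc_refl: "prefix_chain parent x x"
  by (simp add: prefix_chain_def)

lemma pc_trans: "prefix_chain parent x y \<Longrightarrow> prefix_chain parent y z \<Longrightarrow> prefix_chain parent x z"
  unfolding prefix_chain_def by (meson rtrancl_trans)

lemma pc_comparable:
  assumes "prefix_chain parent a c" "prefix_chain parent b c"
  shows "prefix_chain parent a b \<or> prefix_chain parent b a"
proof -
  have sv: "single_valued {(b, b'). parent b = Some b'}"
    by (auto simp: single_valued_def)
  show ?thesis using single_valued_confluent[OF sv] assms unfolding prefix_chain_def by blast
qed

lemma pc_slot:
  assumes bs: "block_structure parent slot genesis" and p: "prefix_chain parent a b" and ne: "a \<noteq> b"
  shows "slot a < slot b"
proof -
  have "(b, a) \<in> {(b, b'). parent b = Some b'}\<^sup>+"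
    using rtranclD[of b a] p ne unfolding prefix_chain_def by auto
  then show ?thesis
  proof (induction rule: trancl_induct)
    case (base y) then show ?case using bs unfolding block_structure_def by auto
  next
    case (step y z) then show ?case using bs unfolding block_structure_def by force
  qed
qed

lemma pc_genesis_target:
  assumes bs: "block_structure parent slot genesis" and p: "prefix_chain parent x genesis"
  shows "x = genesis"
proof -
  have "parent genesis = None" using bs by (simp add: block_structure_def)
  then show ?thesis using p unfolding prefix_chain_def
    by (auto elim: converse_rtranclE)
qed

lemma pc_genesis:
  assumes bs: "block_structure parent slot genesis"
  shows "prefix_chain parent genesis b"
proof -
  have "\<forall>b. nat (slot b + 1) = k \<longrightarrow> prefix_chain parent genesis b" for k
  proof (induction k rule: less_induct)
    case (less k)
    show ?case
    proof (intro allI impI)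
      fix b assume kb: "nat (slot b + 1) = k"
      show "prefix_chain parent genesis b"
      proof (cases "b = genesis")
        case True then show ?thesis by (simp add: pc_refl)
      next
        case False
        then obtain b' where pb: "parent b = Some b'" and sb: "slot b \<ge> 0"
          using bs unfolding block_structure_def by blast
        have "slot b' < slot b" using bs pb unfolding block_structure_def by blast
        moreover have "slot b' \<ge> -1"
          using bs unfolding block_structure_def by (cases "b' = genesis") auto
        ultimately have "nat (slot b' + 1) < k" using kb sb by linarith
        then have "prefix_chain parent genesis b'" using less by blast
        moreover have "prefix_chain parent b' b"
          using pb unfolding prefix_chain_def by auto
        ultimately show ?thesis using pc_trans by metis
      qed
    qed
  qed
  then show ?thesis by blast
qed

lemma just_nonneg:
  assumes "justified parent genesis n V C" "n > 0"
  shows "snd C \<ge> 0"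
  using assms
proof (induction rule: justified.induct)
  case genesis_just then show ?case by simp
next
  case (quorum_just Q C)
  have "real (card Q) > 0" using quorum_just.hyps(2) \<open>n > 0\<close> by simp
  then have "Q \<noteq> {}" by auto
  then obtain v where "v \<in> Q" by auto
  then obtain S T where "(v, S, T) \<in> V \<and> valid_ffg parent S T \<and>
        (justified parent genesis n V S \<and> (0 < n \<longrightarrow> 0 \<le> snd S)) \<and> snd T = snd C"
    using quorum_just.IH by blast
  then show ?case using quorum_just.prems unfolding valid_ffg_def by auto
qed

lemma quorum_inter:
  assumes "Q1 \<subseteq> {..<n}" "Q2 \<subseteq> {..<n}" "real (card Q1) \<ge> 2/3 * real n" "real (card Q2) \<ge> 2/3 * real n"
  shows "real (card (Q1 \<inter> Q2)) \<ge> real n / 3"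
proof -
  have f: "finite Q1" "finite Q2" using assms finite_subset by auto
  have "card (Q1 \<union> Q2) \<le> n" using assms(1,2) by (metis card_lessThan card_mono finite_lessThan le_sup_iff)
  moreover have "card (Q1 \<union> Q2) + card (Q1 \<inter> Q2) = card Q1 + card Q2"
    using card_Un_Int f by metis
  ultimately show ?thesis using assms(3,4) by linarith
qed

lemma same_slot:
  assumes bs: "block_structure parent slot genesis"
    and jA: "justified parent genesis n V1 A" and jB: "justified parent genesis n V2 B"
    and eq: "snd A = snd B"
    and c1: "\<not> prefix_chain parent (fst A) (fst B)" and c2: "\<not> prefix_chain parent (fst B) (fst A)"
  shows "\<exists>D \<subseteq> {..<n}. real (card D) \<ge> real n / 3 \<and> (\<forall>v\<in>D. violates_E1 (V1 \<union> V2) v)"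
proof -
  from jA obtain Q1 where Q1: "Q1 \<subseteq> {..<n}" "real (card Q1) \<ge> 2/3 * real n"
     "\<forall>v\<in>Q1. \<exists>S T. (v, S, T) \<in> V1 \<and> prefix_chain parent (fst A) (fst T) \<and> snd T = snd A"
  proof cases
    case genesis_just then show ?thesis using c1 pc_genesis[OF bs] by auto
  next
    case (quorum_just Q)
    show ?thesis
    proof (rule that[of Q])
      show "Q \<subseteq> {..<n}" "real (card Q) \<ge> 2/3 * real n" using quorum_just(1,2) by auto
      show "\<forall>v\<in>Q. \<exists>S T. (v, S, T) \<in> V1 \<and> prefix_chain parent (fst A) (fst T) \<and> snd T = snd A"
      proof
        fix v assume "v \<in> Q"
        then obtain S T where "(v, S, T) \<in> V1" "prefix_chain parent (fst A) (fst T)" "snd T = snd A"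
          using quorum_just(3) by meson
        then show "\<exists>S T. (v, S, T) \<in> V1 \<and> prefix_chain parent (fst A) (fst T) \<and> snd T = snd A" by blast
      qed
    qed
  qed
  from jB obtain Q2 where Q2: "Q2 \<subseteq> {..<n}" "real (card Q2) \<ge> 2/3 * real n"
     "\<forall>v\<in>Q2. \<exists>S T. (v, S, T) \<in> V2 \<and> prefix_chain parent (fst B) (fst T) \<and> snd T = snd B"
  proof cases
    case genesis_just then show ?thesis using c2 pc_genesis[OF bs] by auto
  next
    case (quorum_just Q)
    show ?thesis
    proof (rule that[of Q])
      show "Q \<subseteq> {..<n}" "real (card Q) \<ge> 2/3 * real n" using quorum_just(1,2) by auto
      show "\<forall>v\<in>Q. \<exists>S T. (v, S, T) \<in> V2 \<and> prefix_chain parent (fst B) (fst T) \<and> snd T = snd B"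
      proof
        fix v assume "v \<in> Q"
        then obtain S T where "(v, S, T) \<in> V2" "prefix_chain parent (fst B) (fst T)" "snd T = snd B"
          using quorum_just(3) by meson
        then show "\<exists>S T. (v, S, T) \<in> V2 \<and> prefix_chain parent (fst B) (fst T) \<and> snd T = snd B" by blast
      qed
    qed
  qed
  have "\<forall>v\<in>Q1 \<inter> Q2. violates_E1 (V1 \<union> V2) v"
  proof
    fix v assume "v \<in> Q1 \<inter> Q2"
    then obtain S T S' T' where a: "(v, S, T) \<in> V1" "prefix_chain parent (fst A) (fst T)" "snd T = snd A"
      and b: "(v, S', T') \<in> V2" "prefix_chain parent (fst B) (fst T')" "snd T' = snd B"
      using Q1(3) Q2(3) by blast
    have "(S, T) \<noteq> (S', T')"
    proof
      assume "(S, T) = (S', T')"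
      then have "T' = T" by simp
      then have "prefix_chain parent (fst B) (fst T)" using b(2) by simp
      from pc_comparable[OF a(2) this] show False using c1 c2 by blast
    qed
    moreover have "(v, S, T) \<in> V1 \<union> V2" "(v, S', T') \<in> V1 \<union> V2" using a(1) b(1) by auto
    moreover have "snd T = snd T'" using a(3) b(3) eq by simp
    ultimately show "violates_E1 (V1 \<union> V2) v" unfolding violates_E1_def by blast
  qed
  then show ?thesis using quorum_inter[OF Q1(1) Q2(1) Q1(2) Q2(2)] Q1(1) by blast
qed

lemma lemB:
  assumes bs: "block_structure parent slot genesis" and npos: "n > 0"
    and jC1: "justified parent genesis n V1 C1"
    and QF: "QF \<subseteq> {..<n}" "real (card QF) \<ge> 2/3 * real n"
      "\<forall>v\<in>QF. \<exists>T. (v, C1, T) \<in> V1 \<and> valid_ffg parent C1 T \<and> snd T = snd C1 + 1"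
    and jC2: "justified parent genesis n V2 C2"
    and lt: "snd C1 < snd C2" and nc: "\<not> prefix_chain parent (fst C1) (fst C2)"
  shows "\<exists>D \<subseteq> {..<n}. real (card D) \<ge> real n / 3 \<and>
           (\<forall>v\<in>D. violates_E1 (V1 \<union> V2) v \<or> violates_E2 slot (V1 \<union> V2) v)"
proof (cases "\<exists>S. justified parent genesis n V2 S \<and> snd S = snd C1 \<and>
     \<not> prefix_chain parent (fst C1) (fst S) \<and> \<not> prefix_chain parent (fst S) (fst C1)")
  case True
  then obtain S where S: "justified parent genesis n V2 S" "snd C1 = snd S"
     "\<not> prefix_chain parent (fst C1) (fst S)" "\<not> prefix_chain parent (fst S) (fst C1)" by auto
  from same_slot[OF bs jC1 S] show ?thesis by blast
next
  case False
  define P where "P J \<longleftrightarrow> justified parent genesis n V2 J \<and> snd C1 < snd J \<and>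
     \<not> prefix_chain parent (fst C1) (fst J)" for J
  have "P C2" using jC2 lt nc by (simp add: P_def)
  then obtain J where PJ: "P J" and minJ: "\<And>J'. P J' \<Longrightarrow> nat (snd J - snd C1) \<le> nat (snd J' - snd C1)"
    using ex_has_least_nat[of P C2 "\<lambda>J. nat (snd J - snd C1)"] by blast
  have c1nn: "snd C1 \<ge> 0" using just_nonneg[OF jC1 npos] .
  from PJ have jJ: "justified parent genesis n V2 J" and ltJ: "snd C1 < snd J"
    and ncJ: "\<not> prefix_chain parent (fst C1) (fst J)" by (auto simp: P_def)
  from jJ obtain QJ where QJ: "QJ \<subseteq> {..<n}" "real (card QJ) \<ge> 2/3 * real n"
     "\<forall>v\<in>QJ. \<exists>S T. (v, S, T) \<in> V2 \<and> valid_ffg parent S T \<and> justified parent genesis n V2 S \<and>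
        prefix_chain parent (fst S) (fst J) \<and> prefix_chain parent (fst J) (fst T) \<and>
        snd T = snd J"
  proof cases
    case genesis_just then show ?thesis using ltJ c1nn by auto
  next
    case (quorum_just Q)
    show ?thesis
    proof (rule that[of Q])
      show "Q \<subseteq> {..<n}" "real (card Q) \<ge> 2/3 * real n" using quorum_just(1,2) by auto
      show "\<forall>v\<in>Q. \<exists>S T. (v, S, T) \<in> V2 \<and> valid_ffg parent S T \<and> justified parent genesis n V2 S \<and>
        prefix_chain parent (fst S) (fst J) \<and> prefix_chain parent (fst J) (fst T) \<and>
        snd T = snd J" using quorum_just(3) by simp
    qed
  qed
  have "\<forall>v\<in>QF \<inter> QJ. violates_E1 (V1 \<union> V2) v \<or> violates_E2 slot (V1 \<union> V2) v"
  proof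
    fix v assume "v \<in> QF \<inter> QJ"
    then obtain T' S T where a: "(v, C1, T') \<in> V1" "snd T' = snd C1 + 1"
      and b: "(v, S, T) \<in> V2" "valid_ffg parent S T" "justified parent genesis n V2 S"
        "prefix_chain parent (fst S) (fst J)" "snd T = snd J"
      using QF(3) QJ(3) by blast
    have neq: "(C1, T') \<noteq> (S, T)"
    proof
      assume "(C1, T') = (S, T)"
      then show False using b(4) ncJ by auto
    qed
    show "violates_E1 (V1 \<union> V2) v \<or> violates_E2 slot (V1 \<union> V2) v"
    proof (cases "snd T' = snd T")
      case True
      then have "violates_E1 (V1 \<union> V2) v" unfolding violates_E1_def using a(1) b(1) neq by blast
      then show ?thesis ..
    next
      case False
      have TT: "snd T' < snd T" using False a(2) b(5) ltJ by linarith
      have sST: "snd S < snd T" using b(2) by (simp add: valid_ffg_def)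
      have "\<not> snd S > snd C1"
      proof
        assume g: "snd S > snd C1"
        have "\<not> P S"
        proof
          assume "P S"
          from minJ[OF this] have "nat (snd J - snd C1) \<le> nat (snd S - snd C1)" .
          then show False using sST b(5) g by linarith
        qed
        then have "prefix_chain parent (fst C1) (fst S)" using b(3) g by (simp add: P_def)
        then show False using b(4) ncJ pc_trans by metis
      qed
      have "ck_less slot S C1"
      proof (cases "snd S < snd C1")
        case True then show ?thesis by (simp add: ck_less_def ck_le_def)
      next
        case False2: False
        with \<open>\<not> snd S > snd C1\<close> have eqs: "snd S = snd C1" by linarith
        have nCS: "\<not> prefix_chain parent (fst C1) (fst S)" using b(4) ncJ pc_trans by metis
        with False b(3) eqs have pSC: "prefix_chain parent (fst S) (fst C1)"
          using \<open>\<not> (\<exists>S. _)\<close> by blast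
        have "fst S \<noteq> fst C1" using nCS pc_refl by metis
        then have "slot (fst S) < slot (fst C1)" using pc_slot[OF bs pSC] by blast
        then show ?thesis using eqs by (simp add: ck_less_def ck_le_def)
      qed
      then have "violates_E2 slot (V1 \<union> V2) v"
        unfolding violates_E2_def using a(1) b(1) neq TT by blast
      then show ?thesis ..
    qed
  qed
  then show ?thesis using quorum_inter[OF QF(1) QJ(1) QF(2) QJ(2)] QF(1) by blast
qed

theorem lemma4p2:
  fixes parent :: "'b \<Rightarrow> 'b option" and slot :: "'b \<Rightarrow> int" and genesis :: 'b
    and n :: nat and f :: real
    and V1 V2 :: "'b vote_msg set" and x1 x2 :: 'b
  assumes "block_structure parent slot genesis"
    and "0 \<le> f" and "f \<le> real n"
    and "chain_finalized parent genesis n V1 x1"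
    and "chain_finalized parent genesis n V2 x2"
    and "conflicting parent x1 x2"
  shows "\<exists>D \<subseteq> {..<n}. real (card D) \<ge> real n / 3 \<and>
           (\<forall>v\<in>D. violates_E1 (V1 \<union> V2) v \<or> violates_E2 slot (V1 \<union> V2) v)"
proof (cases "n = 0")
  case True then show ?thesis by (intro exI[of _ "{}"]) auto
next
  case False
  then have npos: "n > 0" by simp
  note bs = assms(1)
  from assms(4) obtain C1 where f1: "finalized parent genesis n V1 C1" and p1: "prefix_chain parent x1 (fst C1)"
    unfolding chain_finalized_def by blast
  from assms(5) obtain C2 where f2: "finalized parent genesis n V2 C2" and p2: "prefix_chain parent x2 (fst C2)"
    unfolding chain_finalized_def by blast
  have cf: "\<not> prefix_chain parent x1 x2" "\<not> prefix_chain parent x2 x1"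
    using assms(6) by (auto simp: conflicting_def)
  have "C1 \<noteq> (genesis, 0)"
  proof
    assume "C1 = (genesis, 0)"
    then have "x1 = genesis" using pc_genesis_target[OF bs] p1 by auto
    then show False using cf pc_genesis[OF bs] by auto
  qed
  with f1 obtain QF1 where j1: "justified parent genesis n V1 C1" and QF1: "QF1 \<subseteq> {..<n}" "real (card QF1) \<ge> 2/3 * real n"
      "\<forall>v\<in>QF1. \<exists>T. (v, C1, T) \<in> V1 \<and> valid_ffg parent C1 T \<and> snd T = snd C1 + 1"
    unfolding finalized_def by blast
  have "C2 \<noteq> (genesis, 0)"
  proof
    assume "C2 = (genesis, 0)"
    then have "x2 = genesis" using pc_genesis_target[OF bs] p2 by auto
    then show False using cf pc_genesis[OF bs] by auto
  qed
  with f2 obtain QF2 where j2: "justified parent genesis n V2 C2" and QF2: "QF2 \<subseteq> {..<n}" "real (card QF2) \<ge> 2/3 * real n"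
      "\<forall>v\<in>QF2. \<exists>T. (v, C2, T) \<in> V2 \<and> valid_ffg parent C2 T \<and> snd T = snd C2 + 1"
    unfolding finalized_def by blast
  have n12: "\<not> prefix_chain parent (fst C1) (fst C2)"
  proof
    assume "prefix_chain parent (fst C1) (fst C2)"
    then have "prefix_chain parent x1 (fst C2)" using p1 pc_trans by metis
    then show False using p2 cf pc_comparable by metis
  qed
  have n21: "\<not> prefix_chain parent (fst C2) (fst C1)"
  proof
    assume "prefix_chain parent (fst C2) (fst C1)"
    then have "prefix_chain parent x2 (fst C1)" using p2 pc_trans by metis
    then show False using p1 cf pc_comparable by metis
  qed
  consider "snd C1 = snd C2" | "snd C1 < snd C2" | "snd C2 < snd C1" by linarith
  then show ?thesis
  proof cases
    case 1
    from same_slot[OF bs j1 j2 1 n12 n21] show ?thesis by blast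
  next
    case 2
    from lemB[OF bs npos j1 QF1 j2 2 n12] show ?thesis .
  next
    case 3
    from lemB[OF bs npos j2 QF2 j1 3 n21] show ?thesis by (simp add: Un_commute)
  qed
qed

end
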